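(* There exists a constant $c>0$ such that for infinitely many integers $r\ge1$, there is a $1$-gap planar graph $G$ with radius at most $r$ and treewidth $\mathrm{tw}(G)\ge 2^{cr}$.
   Context: Graphs are finite, simple, undirected. An embedded graph has vertices as distinct points of $\mathbb{R}^2$ and each edge $uv$ as a curve with endpoints $u,v$ containing no vertex in its interior; a crossing is a point common to two edges other than their endpoints. An embedded graph is $k$-gap planar if every crossing can be charged to one of the two edges involved so that at most $k$ crossings are charged to each edge; a graph is $k$-gap planar if it is isomorphic to a $k$-gap planar embedded graph. *)

theory Defs
  imports "HOL-Analysis.Analysis" "HOL-Library.Extended_Nat"
begin

definition simple_graph :: "'a set \<Rightarrow> 'a set set \<Rightarrow> bool" where
  "simple_graph V E \<longleftrightarrow> finite V \<and> (\<forall>e\<in>E. e \<subseteq> V \<and> card e = 2)"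

definition adj_rel :: "'a set set \<Rightarrow> ('a \<times> 'a) set" where
  "adj_rel E = {(u, v). {u, v} \<in> E}"

definition graph_dist :: "'a set set \<Rightarrow> 'a \<Rightarrow> 'a \<Rightarrow> enat" where
  "graph_dist E u v = (INF n \<in> {n. (u, v) \<in> adj_rel E ^^ n}. enat n)"

definition eccentricity :: "'a set \<Rightarrow> 'a set set \<Rightarrow> 'a \<Rightarrow> enat" where
  "eccentricity V E v = (SUP u \<in> V. graph_dist E v u)"

definition radius :: "'a set \<Rightarrow> 'a set set \<Rightarrow> enat" where
  "radius V E = (INF v \<in> V. eccentricity V E v)"

definition connected_in :: "'a set set \<Rightarrow> 'a set \<Rightarrow> bool" where
  "connected_in E S \<longleftrightarrow>
     (\<forall>u\<in>S. \<forall>v\<in>S. (u, v) \<in> (adj_rel {e\<in>E. e \<subseteq> S})\<^sup>*)"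

definition is_tree :: "'a set \<Rightarrow> 'a set set \<Rightarrow> bool" where
  "is_tree N F \<longleftrightarrow> simple_graph N F \<and> N \<noteq> {} \<and> connected_in F N
                    \<and> finite F \<and> card F + 1 = card N"

definition tree_decomposition ::
  "'a set \<Rightarrow> 'a set set \<Rightarrow> nat set \<Rightarrow> nat set set \<Rightarrow> (nat \<Rightarrow> 'a set) \<Rightarrow> bool" where
  "tree_decomposition V E N F B \<longleftrightarrow>
     is_tree N F \<and>
     (\<forall>t\<in>N. B t \<subseteq> V) \<and>
     (\<forall>v\<in>V. \<exists>t\<in>N. v \<in> B t) \<and>
     (\<forall>e\<in>E. \<exists>t\<in>N. e \<subseteq> B t) \<and>
     (\<forall>v\<in>V. connected_in F {t\<in>N. v \<in> B t})"

definition decomposition_width :: "nat set \<Rightarrow> (nat \<Rightarrow> 'a set) \<Rightarrow> nat" where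
  "decomposition_width N B = Max ((\<lambda>t. card (B t)) ` N) - 1"

definition treewidth :: "'a set \<Rightarrow> 'a set set \<Rightarrow> nat" where
  "treewidth V E = Min {w. \<exists>N F B. tree_decomposition V E N F B \<and> decomposition_width N B = w}"

text \<open>A crossing is a pair of distinct edges together with a common point of
their curves other than their endpoints; crossings are recorded as (point, {e1,e2}).\<close>

definition crossings ::
  "'a set \<Rightarrow> 'a set set \<Rightarrow> ('a \<Rightarrow> real \<times> real) \<Rightarrow> ('a set \<Rightarrow> real \<Rightarrow> real \<times> real)
     \<Rightarrow> ((real \<times> real) \<times> 'a set set) set" where
  "crossings V E pos curve =
     {(p, {e1, e2}) | p e1 e2. e1 \<in> E \<and> e2 \<in> E \<and> e1 \<noteq> e2 \<and>
        p \<in> path_image (curve e1) \<and> p \<in> path_image (curve e2) \<and>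
        p \<notin> pos ` (e1 \<union> e2)}"

definition valid_drawing ::
  "'a set \<Rightarrow> 'a set set \<Rightarrow> ('a \<Rightarrow> real \<times> real) \<Rightarrow> ('a set \<Rightarrow> real \<Rightarrow> real \<times> real) \<Rightarrow> bool" where
  "valid_drawing V E pos curve \<longleftrightarrow>
     inj_on pos V \<and>
     (\<forall>e\<in>E. arc (curve e) \<and>
        (\<exists>u v. e = {u, v} \<and> pathstart (curve e) = pos u \<and> pathfinish (curve e) = pos v) \<and>
        (\<forall>w\<in>V. pos w \<in> path_image (curve e) \<longrightarrow> w \<in> e))"

definition k_gap_planar_drawing ::
  "nat \<Rightarrow> 'a set \<Rightarrow> 'a set set \<Rightarrow> ('a \<Rightarrow> real \<times> real) \<Rightarrow> ('a set \<Rightarrow> real \<Rightarrow> real \<times> real) \<Rightarrow> bool" where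
  "k_gap_planar_drawing k V E pos curve \<longleftrightarrow>
     valid_drawing V E pos curve \<and>
     (\<exists>charge. (\<forall>x\<in>crossings V E pos curve. charge x \<in> snd x) \<and>
        (\<forall>e\<in>E. finite {x\<in>crossings V E pos curve. charge x = e} \<and>
                card {x\<in>crossings V E pos curve. charge x = e} \<le> k))"

text \<open>A graph is k-gap planar if it (or, equivalently, an isomorphic copy) has a
k-gap planar drawing.\<close>
definition k_gap_planar :: "nat \<Rightarrow> 'a set \<Rightarrow> 'a set set \<Rightarrow> bool" where
  "k_gap_planar k V E \<longleftrightarrow> (\<exists>pos curve. k_gap_planar_drawing k V E pos curve)"

end

theory Submission
  imports Defs "HOL-Library.Countable"
begin

lemma adj_rel_iff[simp]: "(u,v) \<in> adj_rel E \<longleftrightarrow> {u,v} \<in> E"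
  unfolding adj_rel_def by auto

lemma connected_in_mono_rel:
  assumes "S \<subseteq> T" "(u,v) \<in> (adj_rel {e\<in>F. e \<subseteq> S})\<^sup>*"
  shows "(u,v) \<in> (adj_rel {e\<in>F. e \<subseteq> T})\<^sup>*"
proof -
  have "adj_rel {e\<in>F. e \<subseteq> S} \<subseteq> adj_rel {e\<in>F. e \<subseteq> T}" using assms(1) unfolding adj_rel_def by auto
  then show ?thesis using assms(2) rtrancl_mono by blast
qed

lemma leaf_shortcut:
  assumes lp: "l \<noteq> p" and only: "\<forall>e\<in>F. l \<in> e \<longrightarrow> e = {l,p}"
    and u: "u \<in> S" "u \<noteq> l"
    and path: "(u,v) \<in> (adj_rel {e\<in>F. e \<subseteq> S})\<^sup>*"
  shows "(v \<noteq> l \<longrightarrow> (u,v) \<in> (adj_rel {e\<in>F - {{l,p}}. e \<subseteq> S - {l}})\<^sup>*) \<and>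
         (v = l \<longrightarrow> p \<in> S \<and> (u,p) \<in> (adj_rel {e\<in>F - {{l,p}}. e \<subseteq> S - {l}})\<^sup>*)"
  using path
proof (induction rule: rtrancl_induct)
  case base
  then show ?case using u by auto
next
  case (step v w)
  let ?R' = "adj_rel {e\<in>F - {{l,p}}. e \<subseteq> S - {l}}"
  from step.hyps(2) have vw: "{v,w} \<in> F" "{v,w} \<subseteq> S" by auto
  show ?case
  proof (cases "w = l")
    case True
    show ?thesis
    proof (cases "v = l")
      case True then show ?thesis using step.IH \<open>w = l\<close> by auto
    next
      case False
      with vw True only have "{v,l} = {l,p}" by auto
      then have "v = p" using False by (auto simp: doubleton_eq_iff)
      then show ?thesis using step.IH False True vw by auto
    qed
  next
    case False
    show ?thesis
    proof (cases "v = l")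
      case True
      with vw only have "{l,w} = {l,p}" by auto
      then have "w = p" using False by (auto simp: doubleton_eq_iff)
      then show ?thesis using step.IH True False by auto
    next
      case vl: False
      have "{v,w} \<noteq> {l,p}" using vl False by (auto simp: doubleton_eq_iff)
      then have "(v,w) \<in> ?R'" using vw vl False by auto
      then show ?thesis using step.IH vl False by (meson rtrancl.rtrancl_into_rtrancl)
    qed
  qed
qed

lemma connected_remove_leaf:
  assumes lp: "l \<noteq> p" and only: "\<forall>e\<in>F. l \<in> e \<longrightarrow> e = {l,p}" and c: "connected_in F S"
  shows "connected_in (F - {{l,p}}) (S - {l})"
  unfolding connected_in_def
proof (intro ballI)
  fix u v assume "u \<in> S - {l}" "v \<in> S - {l}"
  then show "(u,v) \<in> (adj_rel {e\<in>F - {{l,p}}. e \<subseteq> S - {l}})\<^sup>*"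
    using leaf_shortcut[OF lp only, of u S v] c unfolding connected_in_def by auto
qed

lemma connected_leaf_has_p:
  assumes lp: "l \<noteq> p" and only: "\<forall>e\<in>F. l \<in> e \<longrightarrow> e = {l,p}" and c: "connected_in F S"
   and "l \<in> S" "u \<in> S" "u \<noteq> l"
  shows "p \<in> S"
  using leaf_shortcut[OF lp only, of u S l] c assms unfolding connected_in_def by auto

lemma tree_has_leaf:
  assumes T: "is_tree N F" and two: "card N \<ge> 2"
  shows "\<exists>l p. l \<in> N \<and> p \<in> N \<and> l \<noteq> p \<and> {l,p} \<in> F \<and> (\<forall>e\<in>F. l \<in> e \<longrightarrow> e = {l,p})"
proof -
  from T have fin: "finite N" "finite F" and sg: "\<forall>e\<in>F. e \<subseteq> N \<and> card e = 2"
    and con: "connected_in F N" and cardF: "card F + 1 = card N"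
    unfolding is_tree_def simple_graph_def by auto
  define deg where "deg v = card {e\<in>F. v \<in> e}" for v
  have sum_deg: "(\<Sum>v\<in>N. deg v) = (\<Sum>e\<in>F. 2)"
    unfolding deg_def
  proof (rule sum_multicount_gen[OF fin])
    show "\<forall>e\<in>F. card {v \<in> N. v \<in> e} = 2"
    proof
      fix e assume "e \<in> F"
      then have "{v \<in> N. v \<in> e} = e" using sg by auto
      then show "card {v \<in> N. v \<in> e} = 2" using sg \<open>e \<in> F\<close> by auto
    qed
  qed
  have deg1: "deg v \<ge> 1" if "v \<in> N" for v
  proof -
    obtain w where w: "w \<in> N" "w \<noteq> v"
    proof -
      have "N - {v} \<noteq> {}"
      proof
        assume "N - {v} = {}"
        then have "N \<subseteq> {v}" by auto
        then have "card N \<le> 1" using card_mono[of "{v}" N] by auto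
        then show False using two by auto
      qed
      then show ?thesis using that by auto
    qed
    have "(v,w) \<in> (adj_rel {e\<in>F. e \<subseteq> N})\<^sup>*" using con that w unfolding connected_in_def by auto
    then obtain x where "(v,x) \<in> adj_rel {e\<in>F. e \<subseteq> N}"
      using w(2) by (metis converse_rtranclE)
    then have "{v,x} \<in> {e\<in>F. v \<in> e}" by auto
    moreover have "finite {e\<in>F. v \<in> e}" using fin by auto
    ultimately show ?thesis unfolding deg_def
      by (simp add: Suc_le_eq card_gt_0_iff) blast
  qed
  have "\<exists>l\<in>N. deg l < 2"
  proof (rule ccontr)
    assume "\<not> ?thesis"
    then have "(\<Sum>v\<in>N. (2::nat)) \<le> (\<Sum>v\<in>N. deg v)" by (intro sum_mono) auto
    then have "2 * card N \<le> 2 * card F" using sum_deg by (simp add: mult.commute)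
    then show False using cardF by auto
  qed
  then obtain l where l: "l \<in> N" "deg l = 1" using deg1 by fastforce
  then obtain e0 where e0: "{e\<in>F. l \<in> e} = {e0}" unfolding deg_def using card_1_singletonE by blast
  then have "e0 \<in> F" "l \<in> e0" by auto
  then have "card e0 = 2" using sg by auto
  then obtain x y where xy: "e0 = {x,y}" "x \<noteq> y" by (auto simp: card_2_iff)
  define p where "p = (if x = l then y else x)"
  have e0lp: "e0 = {l,p}" using xy \<open>l \<in> e0\<close> p_def by auto
  have "l \<noteq> p" using xy \<open>l \<in> e0\<close> p_def by auto
  moreover have "p \<in> N" using sg \<open>e0 \<in> F\<close> e0lp by auto
  moreover have "\<forall>e\<in>F. l \<in> e \<longrightarrow> e = {l,p}"
  proof (intro ballI impI)
    fix e assume "e \<in> F" "l \<in> e"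
    then have "e \<in> {e\<in>F. l \<in> e}" by simp
    then have "e \<in> {e0}" by (simp only: e0)
    then show "e = {l,p}" using e0lp by simp
  qed
  moreover have "{l,p} \<in> F" using e0lp \<open>e0 \<in> F\<close> by simp
  ultimately show ?thesis using l(1)
    by (intro exI[of _ l] exI[of _ p] conjI) assumption+
qed

lemma remove_leaf_tree:
  assumes T: "is_tree N F" and l: "l \<in> N" "p \<in> N" "l \<noteq> p" "{l,p} \<in> F"
    and only: "\<forall>e\<in>F. l \<in> e \<longrightarrow> e = {l,p}"
  shows "is_tree (N - {l}) (F - {{l,p}})"
proof -
  from T have fin: "finite N" "finite F" and sg: "\<forall>e\<in>F. e \<subseteq> N \<and> card e = 2"
    and con: "connected_in F N" and cardF: "card F + 1 = card N"
    unfolding is_tree_def simple_graph_def by auto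
  have "simple_graph (N - {l}) (F - {{l,p}})"
    unfolding simple_graph_def using fin sg only by auto
  moreover have "N - {l} \<noteq> {}" using l by auto
  moreover have "connected_in (F - {{l,p}}) (N - {l})"
    using connected_remove_leaf[OF l(3) only con] .
  moreover have "card (F - {{l,p}}) + 1 = card (N - {l})"
  proof -
    have "card F > 0" using fin l(4) card_gt_0_iff by blast
    then show ?thesis using cardF fin l by (simp add: card_Diff_singleton)
  qed
  ultimately show ?thesis unfolding is_tree_def using fin by auto
qed

lemma helly_tree:
  "is_tree N F \<Longrightarrow> (\<forall>k\<in>K. X k \<subseteq> N \<and> X k \<noteq> {} \<and> connected_in F (X k)) \<Longrightarrow>
   (\<forall>k\<in>K. \<forall>k'\<in>K. X k \<inter> X k' \<noteq> {}) \<Longrightarrow> \<exists>t\<in>N. \<forall>k\<in>K. t \<in> X k"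
proof (induction "card N" arbitrary: N F X rule: less_induct)
  case less
  note T = less.prems(1) and XP = less.prems(2) and XI = less.prems(3)
  from T have fin: "finite N" and ne: "N \<noteq> {}" unfolding is_tree_def simple_graph_def by auto
  show ?case
  proof (cases "card N \<ge> 2")
    case False
    moreover have "card N \<noteq> 0" using fin ne by simp
    ultimately have "card N = 1" by linarith
    then obtain t0 where "N = {t0}" using card_1_singletonE by blast
    then have "\<forall>k\<in>K. t0 \<in> X k" using XP by fastforce
    then show ?thesis using \<open>N = {t0}\<close> by blast
  next
    case True
    obtain l p where lp: "l \<in> N" "p \<in> N" "l \<noteq> p" "{l,p} \<in> F" and only: "\<forall>e\<in>F. l \<in> e \<longrightarrow> e = {l,p}"
      using tree_has_leaf[OF T True] by blast
    show ?thesis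
    proof (cases "\<exists>k0\<in>K. X k0 = {l}")
      case True
      then obtain k0 where "k0 \<in> K" "X k0 = {l}" by blast
      have "\<forall>k\<in>K. l \<in> X k"
      proof
        fix k assume "k \<in> K"
        then have "X k \<inter> X k0 \<noteq> {}" using XI \<open>k0 \<in> K\<close> by blast
        then show "l \<in> X k" using \<open>X k0 = {l}\<close> by auto
      qed
      then show ?thesis using lp by blast
    next
      case False
      define X' where "X' k = X k - {l}" for k
      have T': "is_tree (N - {l}) (F - {{l,p}})" using remove_leaf_tree[OF T lp only] .
      have lt: "card (N - {l}) < card N" using fin lp by (meson card_Diff1_less)
      have pin: "p \<in> X k" if "k \<in> K" "l \<in> X k" for k
      proof -
        have "X k \<noteq> {l}" "X k \<noteq> {}" "connected_in F (X k)" using False XP that(1) by auto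
        then obtain u where "u \<in> X k" "u \<noteq> l" by blast
        then show ?thesis using connected_leaf_has_p[OF lp(3) only \<open>connected_in F (X k)\<close> that(2)] by blast
      qed
      have "\<forall>k\<in>K. X' k \<subseteq> N - {l} \<and> X' k \<noteq> {} \<and> connected_in (F - {{l,p}}) (X' k)"
      proof
        fix k assume k: "k \<in> K"
        then have "X k \<subseteq> N" "X k \<noteq> {}" "connected_in F (X k)" "X k \<noteq> {l}" using XP False by auto
        then show "X' k \<subseteq> N - {l} \<and> X' k \<noteq> {} \<and> connected_in (F - {{l,p}}) (X' k)"
          unfolding X'_def using connected_remove_leaf[OF lp(3) only] by auto
      qed
      moreover have "\<forall>k\<in>K. \<forall>k'\<in>K. X' k \<inter> X' k' \<noteq> {}"
      proof (intro ballI)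
        fix k k' assume kk: "k \<in> K" "k' \<in> K"
        then obtain x where x: "x \<in> X k" "x \<in> X k'" using XI by blast
        show "X' k \<inter> X' k' \<noteq> {}"
        proof (cases "x = l")
          case True
          then have "p \<in> X' k" "p \<in> X' k'" using pin kk x lp(3) unfolding X'_def by auto
          then show ?thesis by blast
        next
          case False
          then show ?thesis using x unfolding X'_def by blast
        qed
      qed
      ultimately obtain t where "t \<in> N - {l}" "\<forall>k\<in>K. t \<in> X' k"
        using less.hyps[OF lt T'] by blast
      then show ?thesis unfolding X'_def by blast
    qed
  qed
qed

lemma td_connected_image:
  assumes TD: "tree_decomposition V E N F B" and XV: "X \<subseteq> V" and c: "connected_in E X"
  shows "connected_in F {t\<in>N. B t \<inter> X \<noteq> {}}"
proof -
  let ?TX = "{t\<in>N. B t \<inter> X \<noteq> {}}"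
  let ?RF = "adj_rel {e\<in>F. e \<subseteq> ?TX}"
  from TD have cov: "\<forall>e\<in>E. \<exists>t\<in>N. e \<subseteq> B t" and conv: "\<forall>v\<in>V. connected_in F {t\<in>N. v \<in> B t}"
    unfolding tree_decomposition_def by auto
  have sub: "{t\<in>N. v \<in> B t} \<subseteq> ?TX" if "v \<in> X" for v using that by auto
  have base0: "(s,s') \<in> ?RF\<^sup>*" if "v \<in> X" "s \<in> N" "v \<in> B s" "s' \<in> N" "v \<in> B s'" for v s s'
  proof -
    have "(s,s') \<in> (adj_rel {e\<in>F. e \<subseteq> {t\<in>N. v \<in> B t}})\<^sup>*"
      using conv that XV unfolding connected_in_def by blast
    then show ?thesis using connected_in_mono_rel[OF sub[OF that(1)]] by blast
  qed
  have main: "\<forall>s s'. s \<in> N \<and> u \<in> B s \<and> s' \<in> N \<and> v \<in> B s' \<longrightarrow> (s,s') \<in> ?RF\<^sup>*"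
    if "(u,v) \<in> (adj_rel {e\<in>E. e \<subseteq> X})\<^sup>*" "u \<in> X" for u v
    using that(1)
  proof (induction rule: rtrancl_induct)
    case base
    then show ?case using base0 that(2) by blast
  next
    case (step v w)
    then have vw: "{v,w} \<in> E" "{v,w} \<subseteq> X" by auto
    then obtain s0 where s0: "s0 \<in> N" "{v,w} \<subseteq> B s0" using cov by blast
    show ?case
    proof (intro allI impI)
      fix s s' assume a: "s \<in> N \<and> u \<in> B s \<and> s' \<in> N \<and> w \<in> B s'"
      then have "(s,s0) \<in> ?RF\<^sup>*" using step.IH s0 by blast
      moreover have "(s0,s') \<in> ?RF\<^sup>*" using base0[of w s0 s'] vw s0 a by blast
      ultimately show "(s,s') \<in> ?RF\<^sup>*" by simp
    qed
  qed
  show ?thesis unfolding connected_in_def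
  proof (intro ballI)
    fix s s' assume "s \<in> ?TX" "s' \<in> ?TX"
    then obtain u v where "u \<in> B s" "u \<in> X" "v \<in> B s'" "v \<in> X" "s \<in> N" "s' \<in> N" by blast
    then show "(s,s') \<in> ?RF\<^sup>*" using main[of u v] c unfolding connected_in_def by blast
  qed
qed

lemma td_bramble:
  assumes TD: "tree_decomposition V E N F B"
    and X: "\<forall>k\<in>K. X k \<subseteq> V \<and> X k \<noteq> {} \<and> connected_in E (X k)"
    and I: "\<forall>k\<in>K. \<forall>k'\<in>K. X k \<inter> X k' \<noteq> {}"
  shows "\<exists>t\<in>N. \<forall>k\<in>K. B t \<inter> X k \<noteq> {}"
proof -
  define T where "T k = {t\<in>N. B t \<inter> X k \<noteq> {}}" for k
  from TD have tree: "is_tree N F" and cv: "\<forall>v\<in>V. \<exists>t\<in>N. v \<in> B t"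
    unfolding tree_decomposition_def by auto
  have "\<forall>k\<in>K. T k \<subseteq> N \<and> T k \<noteq> {} \<and> connected_in F (T k)"
  proof
    fix k assume k: "k \<in> K"
    have "T k \<noteq> {}"
    proof -
      obtain x where "x \<in> X k" using X k by blast
      then obtain t where "t \<in> N" "x \<in> B t" using cv X k by blast
      then show ?thesis unfolding T_def using \<open>x \<in> X k\<close> by blast
    qed
    then show "T k \<subseteq> N \<and> T k \<noteq> {} \<and> connected_in F (T k)"
      unfolding T_def using td_connected_image[OF TD] X k by auto
  qed
  moreover have "\<forall>k\<in>K. \<forall>k'\<in>K. T k \<inter> T k' \<noteq> {}"
  proof (intro ballI)
    fix k k' assume "k \<in> K" "k' \<in> K"
    then obtain x where "x \<in> X k" "x \<in> X k'" using I by blast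
    then obtain t where "t \<in> N" "x \<in> B t" using cv X \<open>k \<in> K\<close> by blast
    then show "T k \<inter> T k' \<noteq> {}" unfolding T_def using \<open>x \<in> X k\<close> \<open>x \<in> X k'\<close> by blast
  qed
  ultimately obtain t where "t \<in> N" "\<forall>k\<in>K. t \<in> T k" using helly_tree[OF tree] by blast
  then show ?thesis unfolding T_def by blast
qed


lemma connected_union:
  assumes "connected_in E A" "connected_in E B" "A \<inter> B \<noteq> {}"
  shows "connected_in E (A \<union> B)"
proof -
  obtain w where w: "w \<in> A" "w \<in> B" using assms(3) by blast
  let ?R = "adj_rel {e\<in>E. e \<subseteq> A \<union> B}"
  have toA: "(x,y) \<in> ?R\<^sup>*" if "x \<in> A" "y \<in> A" for x y
    using assms(1) that connected_in_mono_rel[of A "A \<union> B"] unfolding connected_in_def by blast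
  have toB: "(x,y) \<in> ?R\<^sup>*" if "x \<in> B" "y \<in> B" for x y
    using assms(2) that connected_in_mono_rel[of B "A \<union> B"] unfolding connected_in_def by blast
  show ?thesis unfolding connected_in_def
  proof (intro ballI)
    fix u v assume u: "u \<in> A \<union> B" and v: "v \<in> A \<union> B"
    have uw: "(u,w) \<in> ?R\<^sup>*" using u w toA toB by blast
    have wv: "(w,v) \<in> ?R\<^sup>*" using v w toA toB by blast
    show "(u,v) \<in> ?R\<^sup>*" using uw wv by simp
  qed
qed

lemma trivial_td:
  assumes "simple_graph V E"
  shows "tree_decomposition V E {0} {} (\<lambda>_. V)"
  using assms unfolding tree_decomposition_def is_tree_def simple_graph_def connected_in_def by auto

lemma treewidth_ge:
  assumes sg: "simple_graph V E"
    and H: "\<And>N F B. tree_decomposition V E N F B \<Longrightarrow> \<exists>t\<in>N. card (B t) \<ge> n"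
  shows "treewidth V E \<ge> n - 1"
proof -
  let ?W = "{w. \<exists>N F B. tree_decomposition V E N F B \<and> decomposition_width N B = w}"
  have ne: "?W \<noteq> {}" using trivial_td[OF sg] by blast
  have finV: "finite V" using sg simple_graph_def by auto
  have fin: "?W \<subseteq> {..card V}"
  proof
    fix w assume "w \<in> ?W"
    then obtain N F B where td: "tree_decomposition V E N F B" "decomposition_width N B = w" by blast
    then have fN: "finite N" "N \<noteq> {}" and sub: "\<forall>t\<in>N. B t \<subseteq> V"
      unfolding tree_decomposition_def is_tree_def simple_graph_def by auto
    have "\<forall>t\<in>N. card (B t) \<le> card V" using card_mono[OF finV] sub by blast
    then have "Max ((\<lambda>t. card (B t)) ` N) \<le> card V" using fN by (simp add: Max_le_iff)
    then show "w \<in> {..card V}" using td(2) unfolding decomposition_width_def by auto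
  qed
  have all: "\<forall>w\<in>?W. w \<ge> n - 1"
  proof
    fix w assume "w \<in> ?W"
    then obtain N F B where td: "tree_decomposition V E N F B" "decomposition_width N B = w" by blast
    then have fN: "finite N" unfolding tree_decomposition_def is_tree_def simple_graph_def by auto
    obtain t where t: "t \<in> N" "card (B t) \<ge> n" using H[OF td(1)] by blast
    have "card (B t) \<le> Max ((\<lambda>t. card (B t)) ` N)" using fN t(1) by (simp add: Max_ge)
    then show "w \<ge> n - 1" using td(2) t(2) unfolding decomposition_width_def by linarith
  qed
  have "Min ?W \<in> ?W" using Min_in[OF finite_subset[OF fin] ne] by simp
  then show ?thesis unfolding treewidth_def using all by blast
qed

lemma grid_bramble_bag:
  assumes TD: "tree_decomposition V E N F B" and finV: "finite V"
   and R: "\<forall>i<n. R i \<subseteq> V \<and> connected_in E (R i)" and C: "\<forall>j<n. C j \<subseteq> V \<and> connected_in E (C j)"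
   and RC: "\<forall>i<n. \<forall>j<n. R i \<inter> C j \<noteq> {}"
   and Rd: "\<forall>i<n. \<forall>i'<n. i \<noteq> i' \<longrightarrow> R i \<inter> R i' = {}"
   and Cd: "\<forall>j<n. \<forall>j'<n. j \<noteq> j' \<longrightarrow> C j \<inter> C j' = {}"
  shows "\<exists>t\<in>N. card (B t) \<ge> n"
proof (cases "n = 0")
  case True
  have "N \<noteq> {}" using TD unfolding tree_decomposition_def is_tree_def by auto
  then show ?thesis using True by auto
next
  case False
  define X where "X = (\<lambda>(i,j). R i \<union> C j)"
  let ?K = "{..<n} \<times> {..<n}"
  have XP: "\<forall>k\<in>?K. X k \<subseteq> V \<and> X k \<noteq> {} \<and> connected_in E (X k)"
  proof
    fix k assume "k \<in> ?K"
    then obtain i j where k: "k = (i,j)" "i < n" "j < n" by blast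
    then show "X k \<subseteq> V \<and> X k \<noteq> {} \<and> connected_in E (X k)"
      unfolding X_def using R C RC connected_union[of E "R i" "C j"] by auto
  qed
  have XI: "\<forall>k\<in>?K. \<forall>k'\<in>?K. X k \<inter> X k' \<noteq> {}"
  proof (intro ballI)
    fix k k' assume "k \<in> ?K" "k' \<in> ?K"
    then obtain i j i' j' where k: "k = (i,j)" "i < n" "j < n" "k' = (i',j')" "i' < n" "j' < n" by blast
    have "R i \<inter> C j' \<noteq> {}" using RC k by blast
    then show "X k \<inter> X k' \<noteq> {}" unfolding X_def k by blast
  qed
  obtain t where t: "t \<in> N" "\<forall>k\<in>?K. B t \<inter> X k \<noteq> {}" using td_bramble[OF TD XP XI] by blast
  have "B t \<subseteq> V" using TD t(1) unfolding tree_decomposition_def by auto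
  then have Bfin: "finite (B t)" using finV finite_subset by blast
  show ?thesis
  proof (rule ccontr)
    assume "\<not> ?thesis"
    then have lt: "card (B t) < n" using t by auto
    have hitall: "n \<le> card (B t)" if hit: "\<forall>i<n. B t \<inter> S i \<noteq> {}" and dis: "\<forall>i<n. \<forall>i'<n. i \<noteq> i' \<longrightarrow> S i \<inter> S i' = {}" for S
    proof -
      define f where "f i = (SOME x. x \<in> B t \<inter> S i)" for i
      have f: "\<forall>i<n. f i \<in> B t \<inter> S i" unfolding f_def using hit by (metis ex_in_conv someI_ex)
      have "inj_on f {..<n}" unfolding inj_on_def
      proof (intro ballI impI)
        fix i i' assume "i \<in> {..<n}" "i' \<in> {..<n}" "f i = f i'"
        then show "i = i'" using f dis by (metis IntD2 disjoint_iff lessThan_iff)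
      qed
      then have "card (f ` {..<n}) = n" by (simp add: card_image)
      moreover have "f ` {..<n} \<subseteq> B t" using f by auto
      ultimately show "n \<le> card (B t)" using card_mono[OF Bfin] by metis
    qed
    have "\<exists>i<n. B t \<inter> R i = {}" using hitall[of R] Rd lt by auto
    then obtain i where i: "i < n" "B t \<inter> R i = {}" by blast
    have "\<exists>j<n. B t \<inter> C j = {}" using hitall[of C] Cd lt by auto
    then obtain j where j: "j < n" "B t \<inter> C j = {}" by blast
    have "B t \<inter> X (i,j) = {}" unfolding X_def using i j by auto
    then show False using t(2) i j by auto
  qed
qed

lemma treewidth_grid:
  assumes sg: "simple_graph V E"
   and R: "\<forall>i<n. R i \<subseteq> V \<and> connected_in E (R i)" and C: "\<forall>j<n. C j \<subseteq> V \<and> connected_in E (C j)"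
   and RC: "\<forall>i<n. \<forall>j<n. R i \<inter> C j \<noteq> {}"
   and Rd: "\<forall>i<n. \<forall>i'<n. i \<noteq> i' \<longrightarrow> R i \<inter> R i' = {}"
   and Cd: "\<forall>j<n. \<forall>j'<n. j \<noteq> j' \<longrightarrow> C j \<inter> C j' = {}"
  shows "treewidth V E \<ge> n - 1"
proof (rule treewidth_ge[OF sg])
  fix N F B assume "tree_decomposition V E N F B"
  then show "\<exists>t\<in>N. card (B t) \<ge> n"
    using grid_bramble_bag[OF _ _ R C RC Rd Cd] sg unfolding simple_graph_def by blast
qed

definition rn :: "nat \<Rightarrow> nat \<Rightarrow> nat \<Rightarrow> nat \<Rightarrow> int \<times> int" where
  "rn m i t a = ((2 * int a + 1) * 2^t - 1, 2 * int m * int i + int t)"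
definition sn :: "nat \<Rightarrow> nat \<Rightarrow> nat \<Rightarrow> int \<times> int" where
  "sn m t a = (- int t, int m * ((2 * int a + 1) * 2^t - 1))"
definition cp :: "nat \<Rightarrow> nat \<Rightarrow> int \<times> int" where
  "cp j y = (2 * int j, int y)"

definition pos0 :: "int \<times> int \<Rightarrow> real \<times> real" where
  "pos0 q = (of_int (fst q), of_int (snd q))"

definition inn :: "int \<times> int \<Rightarrow> int \<times> int \<Rightarrow> real \<times> real \<Rightarrow> bool" where
  "inn A B p \<longleftrightarrow> p \<in> closed_segment (pos0 A) (pos0 B) \<and> p \<noteq> pos0 A \<and> p \<noteq> pos0 B"

lemma inn_param:
  assumes "inn A B p"
  shows "\<exists>u. 0 < u \<and> u < 1 \<and> fst p = of_int (fst A) + u * (of_int (fst B) - of_int (fst A))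
            \<and> snd p = of_int (snd A) + u * (of_int (snd B) - of_int (snd A))"
proof -
  from assms obtain u where u: "0 \<le> u" "u \<le> 1" "p = (1 - u) *\<^sub>R pos0 A + u *\<^sub>R pos0 B"
    unfolding inn_def closed_segment_def by blast
  have "u \<noteq> 0" using u assms unfolding inn_def by auto
  moreover have "u \<noteq> 1" using u assms unfolding inn_def by auto
  ultimately show ?thesis using u
    by (intro exI[of _ u]) (auto simp: pos0_def algebra_simps)
qed

lemma between_lt:
  fixes x x1 x2 lo hi u :: real
  assumes "0 < u" "u < 1" "x = x1 + u * (x2 - x1)" "lo \<le> x1" "lo \<le> x2" "x1 \<le> hi" "x2 \<le> hi" "x1 \<noteq> x2"
  shows "lo < x \<and> x < hi"
proof (cases "x1 < x2")
  case True
  have "0 < u * (x2 - x1)" using assms True by simp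
  moreover have "u * (x2 - x1) < 1 * (x2 - x1)" using assms True by (intro mult_strict_right_mono) auto
  ultimately show ?thesis using assms by auto
next
  case False
  then have F: "x2 < x1" using assms by auto
  have "0 < u * (x1 - x2)" using assms F by simp
  moreover have "u * (x1 - x2) < 1 * (x1 - x2)" using assms F by (intro mult_strict_right_mono) auto
  moreover have "x = x1 - u * (x1 - x2)" using assms(3) by (simp add: algebra_simps)
  ultimately show ?thesis using assms(4-7) by simp
qed

lemma between_eq:
  fixes x u :: real
  assumes "0 < u" "u < 1" "x = of_int z + u * (of_int z' - of_int z)" "z' = z + 1 \<or> z' = z - 1"
  shows "of_int (min z z') < x \<and> x < of_int (min z z') + 1"
  using assms by (auto simp: algebra_simps)

lemma floor_unique:
  fixes x :: real
  assumes "of_int z < x" "x < of_int z + 1" "of_int w < x" "x < of_int w + 1"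
  shows "z = w"
proof -
  have "z < w + 1" "w < z + 1" using assms by linarith+
  then show ?thesis by linarith
qed

lemma no_int_between:
  fixes z w :: int
  assumes "of_int z < (of_int w::real)" "(of_int w::real) < of_int z + 1"
  shows False
proof -
  have "z < w" "w < z + 1" using assms by linarith+
  then show False by linarith
qed

lemma block_unique:
  fixes z D :: real and k k' :: nat
  assumes "0 < D" "real k * D < z" "z < real (k+1) * D" "real k' * D < z" "z < real (k'+1) * D"
  shows "k = k'"
proof (rule ccontr)
  assume "k \<noteq> k'"
  then consider "k + 1 \<le> k'" | "k' + 1 \<le> k" by linarith
  then show False
  proof cases
    case 1
    then have "real (k+1) * D \<le> real k' * D" using assms(1) by (intro mult_right_mono) auto
    then show False using assms by linarith
  next
    case 2
    then have "real (k'+1) * D \<le> real k * D" using assms(1) by (intro mult_right_mono) auto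
    then show False using assms by linarith
  qed
qed

lemma seg_fst_unique:
  assumes "inn A B p" "inn A B q" "fst A \<noteq> fst B" "fst p = fst q"
  shows "p = q"
proof -
  obtain u where u: "fst p = of_int (fst A) + u * (of_int (fst B) - of_int (fst A))"
     "snd p = of_int (snd A) + u * (of_int (snd B) - of_int (snd A))" using inn_param[OF assms(1)] by blast
  obtain v where v: "fst q = of_int (fst A) + v * (of_int (fst B) - of_int (fst A))"
     "snd q = of_int (snd A) + v * (of_int (snd B) - of_int (snd A))" using inn_param[OF assms(2)] by blast
  have d: "(of_int (fst B) - of_int (fst A) :: real) \<noteq> 0" using assms(3) by simp
  have "u * (of_int (fst B) - of_int (fst A)) = v * (of_int (fst B) - of_int (fst A))" using u v assms(3,4) by auto
  then have "u = v" using d by auto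
  then show ?thesis using u v by (simp add: prod_eq_iff)
qed

lemma row_x_bounds:
  assumes "c < (2::nat)"
  shows "(int (2*a+c)) * 2^(Suc t) - 1 \<le> fst (rn m i (Suc t) a)
    \<and> fst (rn m i (Suc t) a) \<le> int (2*a+c+1) * 2^(Suc t) - 1
    \<and> (int (2*a+c)) * 2^(Suc t) - 1 \<le> fst (rn m i t (2*a+c))
    \<and> fst (rn m i t (2*a+c)) \<le> int (2*a+c+1) * 2^(Suc t) - 1
    \<and> fst (rn m i (Suc t) a) \<noteq> fst (rn m i t (2*a+c))
    \<and> 0 \<le> fst (rn m i (Suc t) a) \<and> 0 \<le> fst (rn m i t (2*a+c))"
proof -
  define T :: int where "T = 2^t"
  have T: "T \<ge> 1" unfolding T_def by simp
  have T4: "0 \<le> T * (int a * 4)" using T by simp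
  have "c = 0 \<or> c = 1" using assms by auto
  then show ?thesis unfolding rn_def using T
    apply (auto simp: T_def[symmetric] algebra_simps)
    using T4 by linarith+
qed

lemma row_inn:
  assumes "c < (2::nat)" "inn (rn m i (Suc t) a) (rn m i t (2*a+c)) p"
  shows "of_int (2 * int m * int i + int t) < snd p \<and> snd p < of_int (2 * int m * int i + int t) + 1
     \<and> 0 < fst p \<and> real (2*a+c) * 2^(Suc t) < fst p + 1 \<and> fst p + 1 < real (2*a+c+1) * 2^(Suc t)"
proof -
  let ?A = "rn m i (Suc t) a" and ?B = "rn m i t (2*a+c)"
  obtain u where u: "0 < u" "u < 1" "fst p = of_int (fst ?A) + u * (of_int (fst ?B) - of_int (fst ?A))"
     "snd p = of_int (snd ?A) + u * (of_int (snd ?B) - of_int (snd ?A))" using inn_param[OF assms(2)] by blast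
  have sy: "snd ?A = 2 * int m * int i + int t + 1" "snd ?B = 2 * int m * int i + int t" unfolding rn_def by auto
  have Y: "of_int (2 * int m * int i + int t) < snd p \<and> snd p < of_int (2 * int m * int i + int t) + 1"
    using u(1,2,4) sy by (auto simp: algebra_simps)
  note xb = row_x_bounds[OF assms(1), of a t m i]
  have X1: "of_int (int (2*a+c) * 2^(Suc t) - 1) < fst p \<and> fst p < of_int (int (2*a+c+1) * 2^(Suc t) - 1)"
    apply (rule between_lt[OF u(1,2,3)])
    using xb by (simp_all only: of_int_le_iff of_int_eq_iff) simp_all
  have X0: "of_int 0 < fst p \<and> fst p < of_int (int (2*a+c+1) * 2^(Suc t) - 1)"
    apply (rule between_lt[OF u(1,2,3)])
    using xb by (simp_all only: of_int_le_iff of_int_eq_iff) simp_all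
  show ?thesis using Y X1 X0 by simp
qed

lemma sp_inn:
  assumes "c < (2::nat)" "m > 0" "inn (sn m (Suc t) a) (sn m t (2*a+c)) p"
  shows "- real t - 1 < fst p \<and> fst p < - real t
     \<and> real (2*a+c) * 2^(Suc t) < snd p / m + 1 \<and> snd p / m + 1 < real (2*a+c+1) * 2^(Suc t)"
proof -
  let ?A = "sn m (Suc t) a" and ?B = "sn m t (2*a+c)"
  let ?A' = "rn m 0 (Suc t) a" and ?B' = "rn m 0 t (2*a+c)"
  obtain u where u: "0 < u" "u < 1" "fst p = of_int (fst ?A) + u * (of_int (fst ?B) - of_int (fst ?A))"
     "snd p = of_int (snd ?A) + u * (of_int (snd ?B) - of_int (snd ?A))" using inn_param[OF assms(3)] by blast
  have sx: "fst ?A = - int t - 1" "fst ?B = - int t" unfolding sn_def by auto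
  have X: "- real t - 1 < fst p \<and> fst p < - real t"
    using u(1,2,3) sx by (auto simp: algebra_simps)
  have sy: "snd ?A = int m * fst ?A'" "snd ?B = int m * fst ?B'" unfolding sn_def rn_def by auto
  have sp: "snd p / m = of_int (fst ?A') + u * (of_int (fst ?B') - of_int (fst ?A'))"
    using u(4) sy assms(2) by (simp add: field_simps)
  note xb = row_x_bounds[OF assms(1), of a t m 0]
  have X1: "of_int (int (2*a+c) * 2^(Suc t) - 1) < snd p / m \<and> snd p / m < of_int (int (2*a+c+1) * 2^(Suc t) - 1)"
    apply (rule between_lt[OF u(1,2) sp])
    using xb by (simp_all only: of_int_le_iff of_int_eq_iff) simp_all
  show ?thesis using X X1 by simp
qed

lemma col_inn:
  assumes "inn (cp j y) (cp j (Suc y)) p"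
  shows "fst p = 2 * real j \<and> real y < snd p \<and> snd p < real y + 1"
proof -
  let ?A = "cp j y" and ?B = "cp j (Suc y)"
  obtain u where u: "0 < u" "u < 1" "fst p = of_int (fst ?A) + u * (of_int (fst ?B) - of_int (fst ?A))"
     "snd p = of_int (snd ?A) + u * (of_int (snd ?B) - of_int (snd ?A))" using inn_param[OF assms] by blast
  then show ?thesis unfolding cp_def by auto
qed

definition ERr :: "nat \<Rightarrow> ((int \<times> int) \<times> (int \<times> int)) set" where
  "ERr m = {(rn m i (Suc t) a, rn m i t (2*a+c)) | i t a c. i < 2^m \<and> Suc t \<le> m \<and> a < 2^(m - Suc t) \<and> c < 2}"
definition ERs :: "nat \<Rightarrow> ((int \<times> int) \<times> (int \<times> int)) set" where
  "ERs m = {(sn m (Suc t) a, sn m t (2*a+c)) | t a c. Suc t \<le> m \<and> a < 2^(m - Suc t) \<and> c < 2}"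
definition ERc :: "nat \<Rightarrow> ((int \<times> int) \<times> (int \<times> int)) set" where
  "ERc m = {(cp j y, cp j (Suc y)) | j y. j < 2^m \<and> y < 2*m*(2^m - 1)}"
definition ER :: "nat \<Rightarrow> ((int \<times> int) \<times> (int \<times> int)) set" where
  "ER m = ERr m \<union> ERs m \<union> ERc m"

lemma nat_row_eq:
  fixes m i i' t t' :: nat
  assumes "2*m*i + t = 2*m*i' + t'" "t < m" "t' < m"
  shows "i = i' \<and> t = t'"
proof -
  have m: "2*m > 0" using assms by auto
  have "(t + i*(2*m)) div (2*m) = i" using m assms(2) by simp
  moreover have "(t' + i'*(2*m)) div (2*m) = i'" using m assms(3) by simp
  ultimately have "i = i'" using assms(1) by (metis add.commute mult.commute)
  then show ?thesis using assms(1) by simp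
qed

lemma two_digit: "(2::nat)*a+c = 2*a'+c' \<Longrightarrow> c < 2 \<Longrightarrow> c' < 2 \<Longrightarrow> a = a' \<and> c = c'"
  by presburger

lemma rr_same:
  assumes "c < 2" "c' < 2" "Suc t \<le> m" "Suc t' \<le> m"
    "inn (rn m i (Suc t) a) (rn m i t (2*a+c)) p" "inn (rn m i' (Suc t') a') (rn m i' t' (2*a'+c')) p"
  shows "i = i' \<and> t = t' \<and> a = a' \<and> c = c'"
proof -
  note r1 = row_inn[OF assms(1,5)] and r2 = row_inn[OF assms(2,6)]
  have "2 * int m * int i + int t = 2 * int m * int i' + int t'"
    using floor_unique[of "2 * int m * int i + int t" "snd p" "2 * int m * int i' + int t'"] r1 r2 by blast
  then have "int (2*m*i + t) = int (2*m*i' + t')" by simp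
  then have eq: "2*m*i + t = 2*m*i' + t'" by (simp only: of_nat_eq_iff)
  have "t < m" "t' < m" using assms(3,4) by auto
  note it = nat_row_eq[OF eq this]
  have "2*a+c = 2*a'+c'"
    using block_unique[of "2^(Suc t)" "2*a+c" "fst p + 1" "2*a'+c'"] r1 r2 it by simp
  then show ?thesis using two_digit[OF _ assms(1,2)] it by blast
qed

lemma ss_same:
  assumes "c < 2" "c' < 2" "m > 0"
    "inn (sn m (Suc t) a) (sn m t (2*a+c)) p" "inn (sn m (Suc t') a') (sn m t' (2*a'+c')) p"
  shows "t = t' \<and> a = a' \<and> c = c'"
proof -
  note r1 = sp_inn[OF assms(1,3,4)] and r2 = sp_inn[OF assms(2,3,5)]
  have "- int t - 1 = - int t' - 1"
    using floor_unique[of "- int t - 1" "fst p" "- int t' - 1"] r1 r2 by simp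
  then have tt: "t = t'" by simp
  have "2*a+c = 2*a'+c'"
    using block_unique[of "2^(Suc t)" "2*a+c" "snd p / m + 1" "2*a'+c'"] r1 r2 tt by simp
  then show ?thesis using two_digit[OF _ assms(1,2)] tt by blast
qed

lemma cc_same:
  assumes "inn (cp j y) (cp j (Suc y)) p" "inn (cp j' y') (cp j' (Suc y')) p"
  shows "j = j' \<and> y = y'"
proof -
  note r1 = col_inn[OF assms(1)] and r2 = col_inn[OF assms(2)]
  have "j = j'" using r1 r2 by simp
  moreover have "int y = int y'"
    using floor_unique[of "int y" "snd p" "int y'"] r1 r2 by simp
  ultimately show ?thesis by simp
qed

lemma rs_false:
  assumes "c < 2" "c' < 2" "m > 0"
    "inn (rn m i (Suc t) a) (rn m i t (2*a+c)) p" "inn (sn m (Suc t') a') (sn m t' (2*a'+c')) p"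
  shows False
  using row_inn[OF assms(1,4)] sp_inn[OF assms(2,3,5)] by linarith

lemma sc_false:
  assumes "c < 2" "m > 0"
    "inn (sn m (Suc t) a) (sn m t (2*a+c)) p" "inn (cp j y) (cp j (Suc y)) p"
  shows False
  using sp_inn[OF assms(1,2,3)] col_inn[OF assms(4)] by linarith

lemma cross_class:
  assumes m: "m \<ge> 1" and e1: "(A,B) \<in> ER m" and e2: "(A',B') \<in> ER m" and p: "inn A B p" "inn A' B' p"
  shows "(A,B) = (A',B') \<or> ((A,B) \<in> ERr m \<and> (A',B') \<in> ERc m) \<or> ((A,B) \<in> ERc m \<and> (A',B') \<in> ERr m)"
proof -
  have m0: "m > 0" using m by simp
  consider "(A,B) \<in> ERr m" | "(A,B) \<in> ERs m" | "(A,B) \<in> ERc m" using e1 unfolding ER_def by blast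
  then show ?thesis
  proof cases
    case 1
    then obtain i t a c where q: "A = rn m i (Suc t) a" "B = rn m i t (2*a+c)" "Suc t \<le> m" "c < 2"
      unfolding ERr_def by blast
    consider "(A',B') \<in> ERr m" | "(A',B') \<in> ERs m" | "(A',B') \<in> ERc m" using e2 unfolding ER_def by blast
    then show ?thesis
    proof cases
      case 1
      then obtain i' t' a' c' where q': "A' = rn m i' (Suc t') a'" "B' = rn m i' t' (2*a'+c')" "Suc t' \<le> m" "c' < 2"
        unfolding ERr_def by blast
      show ?thesis using rr_same[OF q(4) q'(4) q(3) q'(3) p(1)[unfolded q(1,2)] p(2)[unfolded q'(1,2)]] q q' by simp
    next
      case 2
      then obtain t' a' c' where q': "A' = sn m (Suc t') a'" "B' = sn m t' (2*a'+c')" "c' < 2"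
        unfolding ERs_def by blast
      show ?thesis using rs_false[OF q(4) q'(3) m0 p(1)[unfolded q(1,2)] p(2)[unfolded q'(1,2)]] by simp
    next
      case 3
      then show ?thesis using \<open>(A,B) \<in> ERr m\<close> by simp
    qed
  next
    case 2
    then obtain t a c where q: "A = sn m (Suc t) a" "B = sn m t (2*a+c)" "c < 2"
      unfolding ERs_def by blast
    consider "(A',B') \<in> ERr m" | "(A',B') \<in> ERs m" | "(A',B') \<in> ERc m" using e2 unfolding ER_def by blast
    then show ?thesis
    proof cases
      case 1
      then obtain i' t' a' c' where q': "A' = rn m i' (Suc t') a'" "B' = rn m i' t' (2*a'+c')" "c' < 2"
        unfolding ERr_def by blast
      show ?thesis using rs_false[OF q'(3) q(3) m0 p(2)[unfolded q'(1,2)] p(1)[unfolded q(1,2)]] by simp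
    next
      case 2
      then obtain t' a' c' where q': "A' = sn m (Suc t') a'" "B' = sn m t' (2*a'+c')" "c' < 2"
        unfolding ERs_def by blast
      show ?thesis using ss_same[OF q(3) q'(3) m0 p(1)[unfolded q(1,2)] p(2)[unfolded q'(1,2)]] q q' by simp
    next
      case 3
      then obtain j y where q': "A' = cp j y" "B' = cp j (Suc y)" unfolding ERc_def by blast
      show ?thesis using sc_false[OF q(3) m0 p(1)[unfolded q(1,2)] p(2)[unfolded q'(1,2)]] by simp
    qed
  next
    case 3
    then obtain j y where q: "A = cp j y" "B = cp j (Suc y)" unfolding ERc_def by blast
    consider "(A',B') \<in> ERr m" | "(A',B') \<in> ERs m" | "(A',B') \<in> ERc m" using e2 unfolding ER_def by blast
    then show ?thesis
    proof cases
      case 1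
      then show ?thesis using \<open>(A,B) \<in> ERc m\<close> by simp
    next
      case 2
      then obtain t' a' c' where q': "A' = sn m (Suc t') a'" "B' = sn m t' (2*a'+c')" "c' < 2"
        unfolding ERs_def by blast
      show ?thesis using sc_false[OF q'(3) m0 p(2)[unfolded q'(1,2)] p(1)[unfolded q(1,2)]] by simp
    next
      case 3
      then obtain j' y' where q': "A' = cp j' y'" "B' = cp j' (Suc y')" unfolding ERc_def by blast
      show ?thesis using cc_same[OF p(1)[unfolded q(1,2)] p(2)[unfolded q'(1,2)]] q q' by simp
    qed
  qed
qed

lemma rc_unique:
  assumes c: "(A,B) \<in> ERc m" and r1: "(A1,B1) \<in> ERr m" and r2: "(A2,B2) \<in> ERr m"
    and p: "inn A B p1" "inn A B p2" "inn A1 B1 p1" "inn A2 B2 p2"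
  shows "(A1,B1) = (A2,B2) \<and> p1 = p2"
proof -
  obtain j y where q: "A = cp j y" "B = cp j (Suc y)" using c unfolding ERc_def by blast
  obtain i t a c where q1: "A1 = rn m i (Suc t) a" "B1 = rn m i t (2*a+c)" "Suc t \<le> m" "c < 2"
    using r1 unfolding ERr_def by blast
  obtain i' t' a' c' where q2: "A2 = rn m i' (Suc t') a'" "B2 = rn m i' t' (2*a'+c')" "Suc t' \<le> m" "c' < 2"
    using r2 unfolding ERr_def by blast
  note c1 = col_inn[OF p(1)[unfolded q]] and c2 = col_inn[OF p(2)[unfolded q]]
  note w1 = row_inn[OF q1(4) p(3)[unfolded q1]] and w2 = row_inn[OF q2(4) p(4)[unfolded q2]]
  have "int y = 2 * int m * int i + int t"
    by (rule floor_unique[where x="snd p1"]) (use c1 w1 in simp_all)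
  moreover have "int y = 2 * int m * int i' + int t'"
    by (rule floor_unique[where x="snd p2"]) (use c2 w2 in simp_all)
  ultimately have "int (2*m*i + t) = int (2*m*i' + t')" by simp
  then have eq: "2*m*i + t = 2*m*i' + t'" by (simp only: of_nat_eq_iff)
  have "t < m" "t' < m" using q1(3) q2(3) by auto
  note it = nat_row_eq[OF eq this]
  have "fst p1 = fst p2" using c1 c2 by simp
  then have "2*a+c = 2*a'+c'"
    using block_unique[of "2^(Suc t)" "2*a+c" "fst p1 + 1" "2*a'+c'"] w1 w2 it by simp
  then have same: "a = a' \<and> c = c'" using two_digit[OF _ q1(4) q2(4)] by blast
  then have eq: "(A1,B1) = (A2,B2)" using q1 q2 it by simp
  have "fst A1 \<noteq> fst B1" using row_x_bounds[OF q1(4), of a t m i] q1 by simp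
  then have "p1 = p2" using seg_fst_unique[of A1 B1 p1 p2] p(3,4) eq \<open>fst p1 = fst p2\<close> by simp
  then show ?thesis using eq by simp
qed

definition RN :: "nat \<Rightarrow> nat \<Rightarrow> (int \<times> int) set" where
  "RN m i = (\<lambda>(t,a). rn m i t a) ` (SIGMA t:{..m}. {..<2^(m-t)})"
definition SN :: "nat \<Rightarrow> (int \<times> int) set" where
  "SN m = (\<lambda>(t,a). sn m t a) ` (SIGMA t:{..m}. {..<2^(m-t)})"
definition CP :: "nat \<Rightarrow> nat \<Rightarrow> (int \<times> int) set" where
  "CP m j = cp j ` {..2*m*(2^m-1)}"
definition PP :: "nat \<Rightarrow> (int \<times> int) set" where
  "PP m = (\<Union>i<2^m. RN m i) \<union> SN m \<union> (\<Union>j<2^m. CP m j)"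

definition VV :: "nat \<Rightarrow> nat set" where "VV m = to_nat ` PP m"
definition EE :: "nat \<Rightarrow> nat set set" where
  "EE m = (\<lambda>(A,B). {to_nat A, to_nat B}) ` ER m"
definition posn :: "nat \<Rightarrow> real \<times> real" where "posn v = pos0 (from_nat v)"
definition crv :: "nat set \<Rightarrow> real \<Rightarrow> real \<times> real" where
  "crv e = linepath (posn (Min e)) (posn (Max e))"

lemma finite_PP: "finite (PP m)"
  unfolding PP_def RN_def SN_def CP_def by auto

lemma pos0_inj: "pos0 A = pos0 B \<longleftrightarrow> A = B"
  unfolding pos0_def by (auto simp: prod_eq_iff)

lemma posn_to_nat[simp]: "posn (to_nat A) = pos0 A"
  unfolding posn_def by simp

lemma pow_half: "Suc t \<le> m \<Longrightarrow> a < 2^(m - Suc t) \<Longrightarrow> c < (2::nat) \<Longrightarrow> 2*a+c < 2^(m-t)"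
proof -
  assume a: "Suc t \<le> m" "a < 2^(m - Suc t)" "c < 2"
  have "m - t = Suc (m - Suc t)" using a(1) by simp
  then have "(2::nat)^(m-t) = 2 * 2^(m - Suc t)" by simp
  then show ?thesis using a by simp
qed

lemma ER_in_PP:
  assumes "(A,B) \<in> ER m"
  shows "A \<in> PP m \<and> B \<in> PP m"
  using assms unfolding ER_def
proof (elim UnE)
  assume "(A,B) \<in> ERr m"
  then obtain i t a c where q: "A = rn m i (Suc t) a" "B = rn m i t (2*a+c)" "i < 2^m" "Suc t \<le> m"
     "a < 2^(m - Suc t)" "c < 2" unfolding ERr_def by blast
  have "A \<in> RN m i" unfolding RN_def q using q by (intro image_eqI[of _ _ "(Suc t, a)"]) auto
  moreover have "B \<in> RN m i" unfolding RN_def q using q pow_half[OF q(4-6)]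
    by (intro image_eqI[of _ _ "(t, 2*a+c)"]) auto
  ultimately show ?thesis unfolding PP_def using q(3) by blast
next
  assume "(A,B) \<in> ERs m"
  then obtain t a c where q: "A = sn m (Suc t) a" "B = sn m t (2*a+c)" "Suc t \<le> m"
     "a < 2^(m - Suc t)" "c < 2" unfolding ERs_def by blast
  have "A \<in> SN m" unfolding SN_def q using q by (intro image_eqI[of _ _ "(Suc t, a)"]) auto
  moreover have "B \<in> SN m" unfolding SN_def q using q pow_half[OF q(3-5)]
    by (intro image_eqI[of _ _ "(t, 2*a+c)"]) auto
  ultimately show ?thesis unfolding PP_def by blast
next
  assume "(A,B) \<in> ERc m"
  then obtain j y where q: "A = cp j y" "B = cp j (Suc y)" "j < 2^m" "y < 2*m*(2^m-1)"
    unfolding ERc_def by blast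
  have "A \<in> CP m j" "B \<in> CP m j" unfolding CP_def q using q(4) by auto
  then show ?thesis unfolding PP_def using q(3) by blast
qed

lemma ER_neq:
  assumes "(A,B) \<in> ER m"
  shows "A \<noteq> B"
  using assms unfolding ER_def ERr_def ERs_def ERc_def rn_def sn_def cp_def by auto

lemma ER_no_vertex:
  assumes "(A,B) \<in> ER m" "m > 0"
  shows "\<not> inn A B (pos0 q)"
proof
  assume inn: "inn A B (pos0 q)"
  have s: "snd (pos0 q) = of_int (snd q)" "fst (pos0 q) = of_int (fst q)" unfolding pos0_def by auto
  show False using assms(1) unfolding ER_def
  proof (elim UnE)
    assume "(A,B) \<in> ERr m"
    then obtain i t a c where q: "A = rn m i (Suc t) a" "B = rn m i t (2*a+c)" "c < 2"
      unfolding ERr_def by blast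
    show False using row_inn[OF q(3) inn[unfolded q]] no_int_between[of "2 * int m * int i + int t" "snd q"] s
      by simp
  next
    assume "(A,B) \<in> ERs m"
    then obtain t a c where q: "A = sn m (Suc t) a" "B = sn m t (2*a+c)" "c < 2"
      unfolding ERs_def by blast
    show False using sp_inn[OF q(3) assms(2) inn[unfolded q]] no_int_between[of "- int t - 1" "fst q"] s
      by simp
  next
    assume "(A,B) \<in> ERc m"
    then obtain j y where q: "A = cp j y" "B = cp j (Suc y)" unfolding ERc_def by blast
    show False using col_inn[OF inn[unfolded q]] no_int_between[of "int y" "snd q"] s
      by simp
  qed
qed

lemma edge_geom:
  assumes "A \<noteq> B"
  shows "path_image (crv {to_nat A, to_nat B}) = closed_segment (pos0 A) (pos0 B)"
    and "posn ` {to_nat A, to_nat B} = {pos0 A, pos0 B}"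
proof -
  show "posn ` {to_nat A, to_nat B} = {pos0 A, pos0 B}" by simp
  show "path_image (crv {to_nat A, to_nat B}) = closed_segment (pos0 A) (pos0 B)"
  proof (cases "to_nat A \<le> to_nat B")
    case True
    then show ?thesis unfolding crv_def by (simp add: min_def max_def path_image_linepath)
  next
    case False
    then show ?thesis unfolding crv_def
      by (simp add: min_def max_def path_image_linepath closed_segment_commute)
  qed
qed

lemma edge_inn:
  assumes "A \<noteq> B"
  shows "(p \<in> path_image (crv {to_nat A, to_nat B}) \<and> p \<notin> posn ` {to_nat A, to_nat B}) \<longleftrightarrow> inn A B p"
  unfolding edge_geom[OF assms] inn_def by auto

lemma simple_graph_G:
  shows "simple_graph (VV m) (EE m)"
  unfolding simple_graph_def
proof (intro conjI ballI)
  show "finite (VV m)" unfolding VV_def using finite_PP by simp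
  fix e assume "e \<in> EE m"
  then obtain A B where e: "e = {to_nat A, to_nat B}" "(A,B) \<in> ER m" unfolding EE_def by auto
  then show "e \<subseteq> VV m" using ER_in_PP[OF e(2)] unfolding VV_def by auto
  have "to_nat A \<noteq> to_nat B" using ER_neq[OF e(2)] by simp
  then show "card e = 2" using e(1) by simp
qed

lemma valid_G:
  assumes "m > 0"
  shows "valid_drawing (VV m) (EE m) posn crv"
  unfolding valid_drawing_def
proof (intro conjI ballI)
  show "inj_on posn (VV m)" unfolding VV_def inj_on_def by (auto simp: pos0_inj)
  fix e assume "e \<in> EE m"
  then obtain A B where e: "e = {to_nat A, to_nat B}" "(A,B) \<in> ER m" unfolding EE_def by auto
  have AB: "A \<noteq> B" using ER_neq[OF e(2)] .
  have mm: "Min e \<noteq> Max e" "e = {Min e, Max e}" using AB unfolding e(1) by (auto simp: min_def max_def)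
  have "posn (Min e) \<noteq> posn (Max e)"
  proof -
    have "Min e \<in> e" "Max e \<in> e" using mm by auto
    then show ?thesis using mm(1) AB unfolding e(1) by (auto simp: pos0_inj)
  qed
  then show "arc (crv e)" unfolding crv_def by (rule arc_linepath)
  show "\<exists>u v. e = {u, v} \<and> pathstart (crv e) = posn u \<and> pathfinish (crv e) = posn v"
    using mm unfolding crv_def by (intro exI[of _ "Min e"] exI[of _ "Max e"]) simp
  fix w assume w1: "w \<in> VV m"
  show "posn w \<in> path_image (crv e) \<longrightarrow> w \<in> e"
  proof (intro impI)
    assume w2: "posn w \<in> path_image (crv e)"
    note w = w1 w2
    obtain q where q: "w = to_nat q" "q \<in> PP m" using w(1) unfolding VV_def by (rule imageE)
    show "w \<in> e"
    proof (rule ccontr)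
      assume "w \<notin> e"
      then have "posn w \<notin> posn ` e"
        unfolding e(1) q(1) by (auto simp: pos0_inj)
      then have "inn A B (pos0 q)" using edge_inn[OF AB, of "pos0 q"] w(2) unfolding e(1) q(1) by simp
      then show False using ER_no_vertex[OF e(2) assms] by simp
    qed
  qed
qed

definition iscol :: "nat \<Rightarrow> nat set \<Rightarrow> bool" where
  "iscol m e \<longleftrightarrow> (\<exists>A B. (A,B) \<in> ERc m \<and> e = {to_nat A, to_nat B})"

definition chg :: "nat \<Rightarrow> (real \<times> real) \<times> nat set set \<Rightarrow> nat set" where
  "chg m x = (SOME e. e \<in> snd x \<and> iscol m e)"

lemma ERr_not_ERc: "(A,B) \<in> ERr m \<Longrightarrow> (A,B) \<notin> ERc m"
proof
  assume r: "(A,B) \<in> ERr m" and c: "(A,B) \<in> ERc m"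
  obtain i t a cc where q: "A = rn m i (Suc t) a" "B = rn m i t (2*a+cc)" "cc < 2"
    using r unfolding ERr_def by blast
  have "fst A \<noteq> fst B" using row_x_bounds[OF q(3), of a t m i] q by simp
  moreover have "fst A = fst B" using c unfolding ERc_def cp_def by auto
  ultimately show False by simp
qed

lemma crossing_E:
  assumes "x \<in> crossings (VV m) (EE m) posn crv"
  obtains p e1 e2 where "x = (p, {e1,e2})" "e1 \<noteq> e2" "e1 \<in> EE m" "e2 \<in> EE m"
     "p \<in> path_image (crv e1)" "p \<notin> posn ` e1" "p \<in> path_image (crv e2)" "p \<notin> posn ` e2"
  using assms unfolding crossings_def by blast

lemma EE_E:
  assumes "e \<in> EE m"
  obtains A B where "e = {to_nat A, to_nat B}" "(A,B) \<in> ER m"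
  using assms unfolding EE_def by auto

lemma crossing_chg:
  assumes m: "m \<ge> 1" and x: "x \<in> crossings (VV m) (EE m) posn crv"
  shows "chg m x \<in> snd x \<and> iscol m (chg m x)"
proof -
  obtain p e1 e2 where c: "x = (p, {e1,e2})" "e1 \<noteq> e2" "e1 \<in> EE m" "e2 \<in> EE m"
     "p \<in> path_image (crv e1)" "p \<notin> posn ` e1" "p \<in> path_image (crv e2)" "p \<notin> posn ` e2"
    using crossing_E[OF x] by blast
  obtain A B where e1: "e1 = {to_nat A, to_nat B}" "(A,B) \<in> ER m" using EE_E[OF c(3)] by blast
  obtain A' B' where e2: "e2 = {to_nat A', to_nat B'}" "(A',B') \<in> ER m" using EE_E[OF c(4)] by blast
  have i1: "inn A B p" using edge_inn[OF ER_neq[OF e1(2)], of p] c(5,6) e1(1) by simp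
  have i2: "inn A' B' p" using edge_inn[OF ER_neq[OF e2(2)], of p] c(7,8) e2(1) by simp
  have "(A,B) \<noteq> (A',B')" using c(2) e1 e2 by auto
  then have "(A,B) \<in> ERc m \<or> (A',B') \<in> ERc m" using cross_class[OF m e1(2) e2(2) i1 i2] by blast
  then have "iscol m e1 \<or> iscol m e2" unfolding iscol_def using e1(1) e2(1) by blast
  then have "\<exists>e. e \<in> snd x \<and> iscol m e" using c(1) by force
  then show ?thesis unfolding chg_def by (rule someI_ex)
qed

lemma col_crossing:
  assumes m: "m \<ge> 1" and x: "x \<in> crossings (VV m) (EE m) posn crv"
    and col: "(A0,B0) \<in> ERc m" and e: "e = {to_nat A0, to_nat B0}" and es: "e \<in> snd x"
  shows "\<exists>p A1 B1. x = (p, {e, {to_nat A1, to_nat B1}}) \<and> (A1,B1) \<in> ERr m \<and> inn A0 B0 p \<and> inn A1 B1 p"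
proof -
  obtain p e1 e2 where c: "x = (p, {e1,e2})" "e1 \<noteq> e2" "e1 \<in> EE m" "e2 \<in> EE m"
     "p \<in> path_image (crv e1)" "p \<notin> posn ` e1" "p \<in> path_image (crv e2)" "p \<notin> posn ` e2"
    using crossing_E[OF x] by blast
  have AB0: "A0 \<noteq> B0" using col unfolding ERc_def cp_def by auto
  have col': "(A0,B0) \<in> ER m" using col unfolding ER_def by simp
  have gen: "\<exists>A1 B1. e' = {to_nat A1, to_nat B1} \<and> (A1,B1) \<in> ERr m \<and> inn A0 B0 p \<and> inn A1 B1 p"
    if h: "e' \<in> EE m" "e' \<noteq> e" "p \<in> path_image (crv e)" "p \<notin> posn ` e"
       "p \<in> path_image (crv e')" "p \<notin> posn ` e'" for e'
  proof -
    obtain A B where e2: "e' = {to_nat A, to_nat B}" "(A,B) \<in> ER m" using EE_E[OF h(1)] by blast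
    have i0: "inn A0 B0 p" using edge_inn[OF AB0, of p] h(3,4) e by simp
    have i1: "inn A B p" using edge_inn[OF ER_neq[OF e2(2)], of p] h(5,6) e2(1) by simp
    have "(A0,B0) \<noteq> (A,B)" using h(2) e e2 by auto
    moreover have "(A0,B0) \<notin> ERr m" using ERr_not_ERc col by blast
    ultimately have "(A,B) \<in> ERr m" using cross_class[OF m col' e2(2) i0 i1] by blast
    then show ?thesis using e2 i0 i1 by blast
  qed
  from es c(1) have "e = e1 \<or> e = e2" by auto
  then show ?thesis
  proof
    assume "e = e1"
    then obtain A1 B1 where "e2 = {to_nat A1, to_nat B1}" "(A1,B1) \<in> ERr m" "inn A0 B0 p" "inn A1 B1 p"
      using gen[of e2] c by metis
    then show ?thesis using c(1) \<open>e = e1\<close> by blast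
  next
    assume "e = e2"
    then obtain A1 B1 where "e1 = {to_nat A1, to_nat B1}" "(A1,B1) \<in> ERr m" "inn A0 B0 p" "inn A1 B1 p"
      using gen[of e1] c by metis
    moreover have "x = (p, {e, e1})" using c(1) \<open>e = e2\<close> by (simp add: insert_commute)
    ultimately show ?thesis by blast
  qed
qed

lemma all_eq_card:
  assumes "\<forall>x\<in>S. \<forall>y\<in>S. x = y"
  shows "finite S \<and> card S \<le> 1"
proof (cases "S = {}")
  case True then show ?thesis by simp
next
  case False
  then obtain x0 where "x0 \<in> S" by blast
  then have "S = {x0}" using assms by blast
  then show ?thesis by simp
qed

lemma gap1_G:
  assumes m: "m \<ge> 1"
  shows "k_gap_planar 1 (VV m) (EE m)"
  unfolding k_gap_planar_def k_gap_planar_drawing_def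
proof (intro exI conjI)
  show "valid_drawing (VV m) (EE m) posn crv" using valid_G m by simp
  let ?C = "crossings (VV m) (EE m) posn crv"
  show "\<forall>x\<in>?C. chg m x \<in> snd x" using crossing_chg[OF m] by blast
  show "\<forall>e\<in>EE m. finite {x\<in>?C. chg m x = e} \<and> card {x\<in>?C. chg m x = e} \<le> 1"
  proof
    fix e assume eE: "e \<in> EE m"
    let ?S = "{x\<in>?C. chg m x = e}"
    have "\<forall>x\<in>?S. \<forall>y\<in>?S. x = y"
    proof (intro ballI)
      fix x y assume x: "x \<in> ?S" and y: "y \<in> ?S"
      have cx: "e \<in> snd x" "iscol m e" using crossing_chg[OF m, of x] x by auto
      have cy: "e \<in> snd y" using crossing_chg[OF m, of y] y by auto
      obtain A0 B0 where col: "(A0,B0) \<in> ERc m" "e = {to_nat A0, to_nat B0}" using cx(2) unfolding iscol_def by blast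
      obtain p A1 B1 where px: "x = (p, {e, {to_nat A1, to_nat B1}})" "(A1,B1) \<in> ERr m" "inn A0 B0 p" "inn A1 B1 p"
        using col_crossing[OF m _ col cx(1)] x by blast
      obtain p' A2 B2 where py: "y = (p', {e, {to_nat A2, to_nat B2}})" "(A2,B2) \<in> ERr m" "inn A0 B0 p'" "inn A2 B2 p'"
        using col_crossing[OF m _ col cy(1)] y by blast
      have "(A1,B1) = (A2,B2) \<and> p = p'" using rc_unique[OF col(1) px(2) py(2) px(3) py(3) px(4) py(4)] .
      then show "x = y" using px(1) py(1) by simp
    qed
    then show "finite ?S \<and> card ?S \<le> 1" by (rule all_eq_card)
  qed
qed

lemma SN_iff: "q \<in> SN m \<longleftrightarrow> (\<exists>t a. t \<le> m \<and> a < 2^(m-t) \<and> q = sn m t a)"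
  unfolding SN_def by force
lemma RN_iff: "q \<in> RN m i \<longleftrightarrow> (\<exists>t a. t \<le> m \<and> a < 2^(m-t) \<and> q = rn m i t a)"
  unfolding RN_def by force
lemma CP_iff: "q \<in> CP m j \<longleftrightarrow> (\<exists>y. y \<le> 2*m*(2^m-1) \<and> q = cp j y)"
  unfolding CP_def by force

lemma row_down:
  assumes E: "\<And>t a c. Suc t \<le> m \<Longrightarrow> a < 2^(m - Suc t) \<Longrightarrow> c < (2::nat) \<Longrightarrow>
      (to_nat (rn m i (Suc t) a), to_nat (rn m i t (2*a+c))) \<in> Q"
  shows "t + d = m \<Longrightarrow> a < 2^d \<Longrightarrow> (to_nat (rn m i m 0), to_nat (rn m i t a)) \<in> Q ^^ d"
proof (induction d arbitrary: t a)
  case 0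
  then show ?case by simp
next
  case (Suc d)
  have dd: "m - Suc t = d" "a div 2 < 2^d" using Suc.prems by (auto simp: div_less_iff_less_mult)
  have IH: "(to_nat (rn m i m 0), to_nat (rn m i (Suc t) (a div 2))) \<in> Q ^^ d"
    using Suc.IH[of "Suc t" "a div 2"] Suc.prems dd by simp
  have "(to_nat (rn m i (Suc t) (a div 2)), to_nat (rn m i t (2*(a div 2) + a mod 2))) \<in> Q"
    using E[of t "a div 2" "a mod 2"] Suc.prems dd by simp
  then have "(to_nat (rn m i (Suc t) (a div 2)), to_nat (rn m i t a)) \<in> Q" by simp
  then show ?case by (rule relpow_Suc_I[OF IH])
qed

lemma row_up:
  assumes E: "\<And>t a c. Suc t \<le> m \<Longrightarrow> a < 2^(m - Suc t) \<Longrightarrow> c < (2::nat) \<Longrightarrow>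
      (to_nat (rn m i t (2*a+c)), to_nat (rn m i (Suc t) a)) \<in> Q"
  shows "t + d = m \<Longrightarrow> a < 2^d \<Longrightarrow> (to_nat (rn m i t a), to_nat (rn m i m 0)) \<in> Q ^^ d"
proof (induction d arbitrary: t a)
  case 0
  then show ?case by simp
next
  case (Suc d)
  have dd: "m - Suc t = d" "a div 2 < 2^d" using Suc.prems by (auto simp: div_less_iff_less_mult)
  have IH: "(to_nat (rn m i (Suc t) (a div 2)), to_nat (rn m i m 0)) \<in> Q ^^ d"
    using Suc.IH[of "Suc t" "a div 2"] Suc.prems dd by simp
  have "(to_nat (rn m i t (2*(a div 2) + a mod 2)), to_nat (rn m i (Suc t) (a div 2))) \<in> Q"
    using E[of t "a div 2" "a mod 2"] Suc.prems dd by simp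
  then have "(to_nat (rn m i t a), to_nat (rn m i (Suc t) (a div 2))) \<in> Q" by simp
  then show ?case by (rule relpow_Suc_I2[OF _ IH])
qed

lemma sp_down:
  assumes E: "\<And>t a c. Suc t \<le> m \<Longrightarrow> a < 2^(m - Suc t) \<Longrightarrow> c < (2::nat) \<Longrightarrow>
      (to_nat (sn m (Suc t) a), to_nat (sn m t (2*a+c))) \<in> Q"
  shows "t + d = m \<Longrightarrow> a < 2^d \<Longrightarrow> (to_nat (sn m m 0), to_nat (sn m t a)) \<in> Q ^^ d"
proof (induction d arbitrary: t a)
  case 0
  then show ?case by simp
next
  case (Suc d)
  have dd: "m - Suc t = d" "a div 2 < 2^d" using Suc.prems by (auto simp: div_less_iff_less_mult)
  have IH: "(to_nat (sn m m 0), to_nat (sn m (Suc t) (a div 2))) \<in> Q ^^ d"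
    using Suc.IH[of "Suc t" "a div 2"] Suc.prems dd by simp
  have "(to_nat (sn m (Suc t) (a div 2)), to_nat (sn m t (2*(a div 2) + a mod 2))) \<in> Q"
    using E[of t "a div 2" "a mod 2"] Suc.prems dd by simp
  then have "(to_nat (sn m (Suc t) (a div 2)), to_nat (sn m t a)) \<in> Q" by simp
  then show ?case by (rule relpow_Suc_I[OF IH])
qed

lemma col_up:
  assumes E: "\<And>y'. y \<le> y' \<Longrightarrow> y' < y + s \<Longrightarrow> (to_nat (cp j y'), to_nat (cp j (Suc y'))) \<in> Q"
  shows "(to_nat (cp j y), to_nat (cp j (y + s))) \<in> Q ^^ s"
  using E
proof (induction s)
  case 0
  then show ?case by simp
next
  case (Suc s)
  have "(to_nat (cp j y), to_nat (cp j (y + s))) \<in> Q ^^ s" using Suc by simp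
  moreover have "(to_nat (cp j (y + s)), to_nat (cp j (Suc (y + s)))) \<in> Q" using Suc.prems by simp
  ultimately have "(to_nat (cp j y), to_nat (cp j (Suc (y + s)))) \<in> Q ^^ Suc s" by (rule relpow_Suc_I)
  then show ?case by simp
qed

lemma ER_adj:
  assumes "(A,B) \<in> ER m"
  shows "(to_nat A, to_nat B) \<in> adj_rel (EE m)" "(to_nat B, to_nat A) \<in> adj_rel (EE m)"
  using assms unfolding EE_def by (force simp: insert_commute)+

lemma ERr_I: "i < 2^m \<Longrightarrow> Suc t \<le> m \<Longrightarrow> a < 2^(m - Suc t) \<Longrightarrow> c < 2 \<Longrightarrow>
   (rn m i (Suc t) a, rn m i t (2*a+c)) \<in> ER m"
  unfolding ER_def ERr_def by blast

lemma ERs_I: "Suc t \<le> m \<Longrightarrow> a < 2^(m - Suc t) \<Longrightarrow> c < 2 \<Longrightarrow>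
   (sn m (Suc t) a, sn m t (2*a+c)) \<in> ER m"
  unfolding ER_def ERs_def by blast

lemma ERc_I: "j < 2^m \<Longrightarrow> y < 2*m*(2^m - 1) \<Longrightarrow> (cp j y, cp j (Suc y)) \<in> ER m"
  unfolding ER_def ERc_def by blast

lemma dist_le:
  assumes "(u,v) \<in> adj_rel E ^^ k" "k \<le> r"
  shows "graph_dist E u v \<le> enat r"
proof -
  have "graph_dist E u v \<le> enat k" unfolding graph_dist_def using assms(1) by (intro INF_lower) simp
  also have "\<dots> \<le> enat r" using assms(2) by simp
  finally show ?thesis .
qed

lemma sn_leaf: "sn m 0 i = rn m i 0 0" unfolding sn_def rn_def by (simp add: algebra_simps)
lemma rn_leaf: "rn m i 0 j = cp j (2*m*i)" unfolding cp_def rn_def by simp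

lemma radius_G:
  assumes m: "m \<ge> 1"
  shows "radius (VV m) (EE m) \<le> enat (5*m)"
proof -
  let ?Q = "adj_rel (EE m)"
  let ?c = "to_nat (sn m m 0)"
  have "sn m m 0 \<in> SN m" unfolding SN_iff by auto
  then have cV: "?c \<in> VV m" unfolding VV_def PP_def by blast
  have Edown: "(to_nat (rn m i (Suc t) a), to_nat (rn m i t (2*a+c))) \<in> ?Q"
    if "i < 2^m" "Suc t \<le> m" "a < 2^(m - Suc t)" "c < 2" for i t a c
    using ER_adj(1)[OF ERr_I[OF that]] .
  have Eup: "(to_nat (rn m i t (2*a+c)), to_nat (rn m i (Suc t) a)) \<in> ?Q"
    if "i < 2^m" "Suc t \<le> m" "a < 2^(m - Suc t)" "c < 2" for i t a c
    using ER_adj(2)[OF ERr_I[OF that]] .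
  have Es: "(to_nat (sn m (Suc t) a), to_nat (sn m t (2*a+c))) \<in> ?Q"
    if "Suc t \<le> m" "a < 2^(m - Suc t)" "c < 2" for t a c
    using ER_adj(1)[OF ERs_I[OF that]] .
  have toS: "(?c, to_nat (sn m t a)) \<in> ?Q ^^ (m - t)" if "t \<le> m" "a < 2^(m-t)" for t a
    using sp_down[of m ?Q t "m - t" a] Es that by simp
  have toRoot: "(?c, to_nat (rn m i m 0)) \<in> ?Q ^^ (m + m)" if "i < 2^m" for i
  proof -
    have "(?c, to_nat (rn m i 0 0)) \<in> ?Q ^^ m" using toS[of 0 i] that by (simp add: sn_leaf)
    moreover have "(to_nat (rn m i 0 0), to_nat (rn m i m 0)) \<in> ?Q ^^ m"
      using row_up[of m i ?Q 0 m 0] Eup[of i] that by simp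
    ultimately show ?thesis by (rule relpow_trans)
  qed
  have toR: "(?c, to_nat (rn m i t a)) \<in> ?Q ^^ (m + m + (m - t))" if "i < 2^m" "t \<le> m" "a < 2^(m-t)" for i t a
  proof -
    have "(to_nat (rn m i m 0), to_nat (rn m i t a)) \<in> ?Q ^^ (m - t)"
      using row_down[of m i ?Q t "m - t" a] Edown[of i] that by simp
    then show ?thesis by (rule relpow_trans[OF toRoot[OF that(1)]])
  qed
  have ecc: "graph_dist (EE m) ?c w \<le> enat (5*m)" if wV: "w \<in> VV m" for w
  proof -
    obtain q where q: "w = to_nat q" "q \<in> PP m" using wV unfolding VV_def by (rule imageE)
    from q(2) consider "q \<in> SN m" | i where "i < 2^m" "q \<in> RN m i" | j where "j < 2^m" "q \<in> CP m j"
      unfolding PP_def by blast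
    then show ?thesis
    proof cases
      case 1
      then obtain t a where ta: "q = sn m t a" "t \<le> m" "a < 2^(m-t)" unfolding SN_iff by blast
      show ?thesis using dist_le[OF toS[OF ta(2,3)]] ta q(1) by simp
    next
      case (2 i)
      then obtain t a where ta: "q = rn m i t a" "t \<le> m" "a < 2^(m-t)" unfolding RN_iff by blast
      show ?thesis using dist_le[OF toR[OF 2(1) ta(2,3)]] ta q(1) by simp
    next
      case (3 j)
      then obtain y where y: "q = cp j y" "y \<le> 2*m*(2^m-1)" unfolding CP_iff by blast
      define i where "i = y div (2*m)"
      define s where "s = y mod (2*m)"
      have ys: "y = 2*m*i + s" unfolding i_def s_def by simp
      have s_lt: "s < 2*m" unfolding s_def using m by simp
      have "i \<le> 2^m - 1" unfolding i_def using y(2) m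
        by (metis div_le_mono nonzero_mult_div_cancel_left mult_is_0 not_one_le_zero zero_neq_numeral)
      then have i_lt: "i < 2^m" by (metis diff_less le_less_trans less_numeral_extra(1) zero_less_power zero_less_numeral)
      have "(?c, to_nat (rn m i 0 j)) \<in> ?Q ^^ (m + m + (m - 0))"
        using toR[OF i_lt, of 0 j] 3(1) by simp
      then have a1: "(?c, to_nat (cp j (2*m*i))) \<in> ?Q ^^ (m + m + m)" by (simp add: rn_leaf)
      have a2: "(to_nat (cp j (2*m*i)), to_nat (cp j (2*m*i + s))) \<in> ?Q ^^ s"
      proof (rule col_up)
        fix y' assume "2*m*i \<le> y'" "y' < 2*m*i + s"
        then have "y' < 2*m*(2^m-1)" using ys y(2) by linarith
        then show "(to_nat (cp j y'), to_nat (cp j (Suc y'))) \<in> ?Q" using ER_adj(1)[OF ERc_I[OF 3(1)]] by blast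
      qed
      have "(?c, w) \<in> ?Q ^^ (m + m + m + s)" using relpow_trans[OF a1 a2] q(1) y(1) ys by simp
      then show ?thesis using dist_le s_lt by fastforce
    qed
  qed
  have "radius (VV m) (EE m) \<le> eccentricity (VV m) (EE m) ?c"
    unfolding radius_def using cV by (rule INF_lower)
  also have "\<dots> \<le> enat (5*m)" unfolding eccentricity_def using ecc by (intro SUP_least) auto
  finally show ?thesis .
qed

lemma hub_connected:
  assumes h: "h \<in> X" and hu: "\<forall>u\<in>X. (h,u) \<in> (adj_rel {e\<in>E. e \<subseteq> X})\<^sup>*"
  shows "connected_in E X"
  unfolding connected_in_def
proof (intro ballI)
  let ?R = "adj_rel {e\<in>E. e \<subseteq> X}"
  have "sym ?R" unfolding sym_def by (auto simp: insert_commute)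
  then have s: "sym (?R\<^sup>*)" by (rule sym_rtrancl)
  fix u v assume "u \<in> X" "v \<in> X"
  then have "(h,u) \<in> ?R\<^sup>*" "(h,v) \<in> ?R\<^sup>*" using hu by auto
  then have "(u,h) \<in> ?R\<^sup>*" "(h,v) \<in> ?R\<^sup>*" using s unfolding sym_def by blast+
  then show "(u,v) \<in> ?R\<^sup>*" by simp
qed

lemma row_nodes_in:
  assumes "Suc t \<le> m" "a < 2^(m - Suc t)" "c < (2::nat)"
  shows "rn m i (Suc t) a \<in> RN m i" "rn m i t (2*a+c) \<in> RN m i"
proof -
  show "rn m i (Suc t) a \<in> RN m i" unfolding RN_iff using assms
    by (intro exI[of _ "Suc t"] exI[of _ a]) auto
  show "rn m i t (2*a+c) \<in> RN m i" unfolding RN_iff using assms pow_half[OF assms]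
    by (intro exI[of _ t] exI[of _ "2*a+c"]) auto
qed

lemma row_connected:
  assumes i: "i < 2^m"
  shows "connected_in (EE m) (to_nat ` RN m i)"
proof (rule hub_connected)
  let ?X = "to_nat ` RN m i"
  let ?Q = "adj_rel {e\<in>EE m. e \<subseteq> ?X}"
  have "rn m i m 0 \<in> RN m i" unfolding RN_iff by auto
  then show "to_nat (rn m i m 0) \<in> ?X" by (rule imageI)
  have E: "(to_nat (rn m i (Suc t) a), to_nat (rn m i t (2*a+c))) \<in> ?Q"
    if "Suc t \<le> m" "a < 2^(m - Suc t)" "c < 2" for t a c
  proof -
    have "{to_nat (rn m i (Suc t) a), to_nat (rn m i t (2*a+c))} \<in> EE m"
      unfolding EE_def using ERr_I[OF i that] by force
    moreover have "{to_nat (rn m i (Suc t) a), to_nat (rn m i t (2*a+c))} \<subseteq> ?X"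
      using row_nodes_in[OF that] by blast
    ultimately show ?thesis by simp
  qed
  show "\<forall>u\<in>?X. (to_nat (rn m i m 0), u) \<in> ?Q\<^sup>*"
  proof
    fix u assume "u \<in> ?X"
    then obtain q where q: "u = to_nat q" "q \<in> RN m i" by (rule imageE)
    then obtain t a where ta: "u = to_nat (rn m i t a)" "t \<le> m" "a < 2^(m-t)" unfolding RN_iff by blast
    have "(to_nat (rn m i m 0), u) \<in> ?Q ^^ (m - t)" using row_down[of m i ?Q t "m - t" a] E ta by simp
    then show "(to_nat (rn m i m 0), u) \<in> ?Q\<^sup>*" by (rule relpow_imp_rtrancl)
  qed
qed

lemma col_connected:
  assumes j: "j < 2^m"
  shows "connected_in (EE m) (to_nat ` CP m j)"
proof (rule hub_connected)
  let ?X = "to_nat ` CP m j"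
  let ?Q = "adj_rel {e\<in>EE m. e \<subseteq> ?X}"
  have "cp j 0 \<in> CP m j" unfolding CP_iff by auto
  then show "to_nat (cp j 0) \<in> ?X" by (rule imageI)
  show "\<forall>u\<in>?X. (to_nat (cp j 0), u) \<in> ?Q\<^sup>*"
  proof
    fix u assume "u \<in> ?X"
    then obtain q where q: "u = to_nat q" "q \<in> CP m j" by (rule imageE)
    then obtain y where y: "u = to_nat (cp j y)" "y \<le> 2*m*(2^m-1)" unfolding CP_iff by blast
    have "(to_nat (cp j 0), to_nat (cp j (0 + y))) \<in> ?Q ^^ y"
    proof (rule col_up)
      fix y' assume "0 \<le> y'" "y' < 0 + y"
      then have y': "y' < 2*m*(2^m-1)" using y(2) by linarith
      have inE: "{to_nat (cp j y'), to_nat (cp j (Suc y'))} \<in> EE m"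
        unfolding EE_def using ERc_I[OF j y'] by force
      have c1: "cp j y' \<in> CP m j" using y' unfolding CP_iff by (intro exI[of _ y']) simp
      have c2: "cp j (Suc y') \<in> CP m j" using y' unfolding CP_iff by (intro exI[of _ "Suc y'"]) simp
      have "{to_nat (cp j y'), to_nat (cp j (Suc y'))} \<subseteq> ?X" using c1 c2 by blast
      with inE show "(to_nat (cp j y'), to_nat (cp j (Suc y'))) \<in> ?Q" by simp
    qed
    then show "(to_nat (cp j 0), u) \<in> ?Q\<^sup>*" using y(1) by (simp add: relpow_imp_rtrancl)
  qed
qed

lemma nat_row_eq2:
  fixes m i i' t t' :: nat
  assumes "2*m*i + t = 2*m*i' + t'" "t \<le> m" "t' \<le> m" "m \<ge> 1"
  shows "i = i'"
proof -
  have m: "2*m > 0" using assms by auto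
  have "(t + i*(2*m)) div (2*m) = i" using m assms(2,4) by simp
  moreover have "(t' + i'*(2*m)) div (2*m) = i'" using m assms(3,4) by simp
  ultimately show "i = i'" using assms(1) by (metis add.commute mult.commute)
qed

lemma treewidth_G:
  assumes m: "m \<ge> 1"
  shows "treewidth (VV m) (EE m) \<ge> 2^m - 1"
proof (rule treewidth_grid[OF simple_graph_G, where R = "\<lambda>i. to_nat ` RN m i" and C = "\<lambda>j. to_nat ` CP m j"])
  show "\<forall>i<2^m. to_nat ` RN m i \<subseteq> VV m \<and> connected_in (EE m) (to_nat ` RN m i)"
    using row_connected unfolding VV_def PP_def by blast
  show "\<forall>j<2^m. to_nat ` CP m j \<subseteq> VV m \<and> connected_in (EE m) (to_nat ` CP m j)"
    using col_connected unfolding VV_def PP_def by blast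
  show "\<forall>i<2^m. \<forall>j<2^m. to_nat ` RN m i \<inter> to_nat ` CP m j \<noteq> {}"
  proof (intro allI impI)
    fix i j :: nat assume ij: "i < 2^m" "j < 2^m"
    have "rn m i 0 j \<in> RN m i" using ij(2) unfolding RN_iff by (intro exI[of _ 0] exI[of _ j]) simp
    moreover have "i \<le> 2^m - 1" using ij(1) by linarith
    then have "2*m*i \<le> 2*m*(2^m-1)" by (rule mult_le_mono2)
    then have "rn m i 0 j \<in> CP m j" unfolding rn_leaf CP_iff by (intro exI[of _ "2*m*i"]) simp
    ultimately show "to_nat ` RN m i \<inter> to_nat ` CP m j \<noteq> {}" by blast
  qed
  show "\<forall>i<2^m. \<forall>i'<2^m. i \<noteq> i' \<longrightarrow> to_nat ` RN m i \<inter> to_nat ` RN m i' = {}"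
  proof (intro allI impI)
    fix i i' :: nat assume "i < 2^m" "i' < 2^m" "i \<noteq> i'"
    have "RN m i \<inter> RN m i' = {}"
    proof (rule ccontr)
      assume "RN m i \<inter> RN m i' \<noteq> {}"
      then obtain q where "q \<in> RN m i" "q \<in> RN m i'" by blast
      then obtain t a t' a' where "q = rn m i t a" "t \<le> m" "q = rn m i' t' a'" "t' \<le> m" unfolding RN_iff by blast
      then have "2 * int m * int i + int t = 2 * int m * int i' + int t'" unfolding rn_def by simp
      then have "int (2*m*i + t) = int (2*m*i' + t')" by simp
      then have "2*m*i + t = 2*m*i' + t'" by (simp only: of_nat_eq_iff)
      then have "i = i'" using nat_row_eq2 \<open>t \<le> m\<close> \<open>t' \<le> m\<close> m by blast
      then show False using \<open>i \<noteq> i'\<close> by simp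
    qed
    then show "to_nat ` RN m i \<inter> to_nat ` RN m i' = {}" using inj_to_nat
      by (metis image_Int image_empty)
  qed
  show "\<forall>j<2^m. \<forall>j'<2^m. j \<noteq> j' \<longrightarrow> to_nat ` CP m j \<inter> to_nat ` CP m j' = {}"
  proof (intro allI impI)
    fix j j' :: nat assume "j \<noteq> j'"
    have "CP m j \<inter> CP m j' = {}" using \<open>j \<noteq> j'\<close> unfolding CP_def cp_def by auto
    then show "to_nat ` CP m j \<inter> to_nat ` CP m j' = {}" using inj_to_nat
      by (metis image_Int image_empty)
  qed
qed

lemma powr_bound:
  assumes "m \<ge> (2::nat)"
  shows "2 powr (1/10 * real (5*m)) \<le> real (2^m - 1::nat)"
proof -
  define s where "s = (2::real) powr (real m / 2)"
  have e: "1/10 * real (5*m) = real m / 2" by simp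
  have ss: "s * s = 2^m" unfolding s_def by (simp add: powr_add[symmetric] powr_realpow)
  have "(2::real) powr 1 \<le> 2 powr (real m / 2)" using assms by (intro powr_mono) auto
  then have s2: "s \<ge> 2" unfolding s_def by simp
  then have "s * 2 \<le> s * s" by (intro mult_left_mono) auto
  then have "s \<le> 2^m - 1" using ss s2 by linarith
  moreover have "real (2^m - 1::nat) = 2^m - 1" by (simp add: of_nat_diff)
  ultimately show ?thesis using e s_def by simp
qed

theorem theorem42:
  shows "\<exists>c::real. c > 0 \<and>
    infinite {r::nat. r \<ge> 1 \<and>
      (\<exists>(V::nat set) (E::nat set set).
          simple_graph V E \<and> k_gap_planar 1 V E \<and>
          radius V E \<le> enat r \<and>
          real (treewidth V E) \<ge> 2 powr (c * real r))}"
proof (intro exI conjI)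
  show "(1/10::real) > 0" by simp
  let ?S = "{r::nat. r \<ge> 1 \<and>
      (\<exists>(V::nat set) (E::nat set set).
          simple_graph V E \<and> k_gap_planar 1 V E \<and>
          radius V E \<le> enat r \<and>
          real (treewidth V E) \<ge> 2 powr (1/10 * real r))}"
  have mem: "5*m \<in> ?S" if m: "m \<ge> 2" for m
  proof -
    have m1: "m \<ge> 1" using m by simp
    have "real (2^m - 1::nat) \<le> real (treewidth (VV m) (EE m))" using treewidth_G[OF m1] by (simp only: of_nat_le_iff)
    then have "2 powr (1/10 * real (5*m)) \<le> real (treewidth (VV m) (EE m))" using powr_bound[OF m] by linarith
    then show ?thesis using simple_graph_G gap1_G[OF m1] radius_G[OF m1] m by auto
  qed
  show "infinite ?S" unfolding infinite_nat_iff_unbounded_le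
  proof
    fix k
    have "5*(k+2) \<in> ?S" using mem[of "k+2"] by simp
    then show "\<exists>r\<ge>k. r \<in> ?S" by (intro exI[of _ "5*(k+2)"]) simp
  qed
qed

end
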